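(* Suppose $s \geq 2$, $a \geq 1$ with $at' \leq k_I-\delta$ and $t'(sk_I+a)+\delta-1 \leq q$. Then the linear code $\mathcal{C}^F$ over $\mathbb{F}_q$ with parity-check matrix $H^F$ (described in the context) is an optimal $\big(n_F=t'(sk_{I}+a+\delta-1),~k_F=st'k_I,~d_F=at'+\delta;~(r=sk_{I}+a,\delta)\big)$-LRC.
   Context: Let $q$ be a prime power and let $\delta\geq 2$, $t'\geq 1$, $s$, $a$, $k_I$ be positive integers; set $t=st'$, $r=sk_I+a$, $n_F=t'(r+\delta-1)$ and $k_F=tk_I$. Let $\alpha_{i,j}$ ($i\in[t]$, $j\in[k_I]$), $\beta_{i',j'}$ ($i'\in[t']$, $j'\in[a]$) and $\gamma_\ell$ ($\ell\in[\delta-1]$) be $tk_I+at'+\delta-1$ pairwise distinct elements of $\mathbb{F}_q$. For elements $x_1,\dots,x_n\in\mathbb{F}_q$, $V_k(x_1,\dots,x_n)$ denotes the $k\times n$ Vandermonde matrix whose $(u,v)$ entry is $x_v^{u-1}$. For $i\in[t']$ let $L_i$ be the ordered list of $r+\delta-1$ elements $\alpha_{s(i-1)+1,1},\dots,\alpha_{s(i-1)+1,k_I},\dots,\alpha_{si,1},\dots,\alpha_{si,k_I},\beta_{i,1},\dots,\beta_{i,a},\gamma_1,\dots,\gamma_{\delta-1}$. Let $A_i=V_{\delta-1}(L_i)\in\mathbb{F}_q^{(\delta-1)\times(r+\delta-1)}$, and let $B_i\in\mathbb{F}_q^{at'\times(r+\delta-1)}$ be the matrix whose rows are the entrywise powers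 of the list $L_i$ with exponents $\delta-1,\delta,\dots,at'+\delta-2$ (i.e., the row with exponent $e$ is $(y^{e})_{y\in L_i}$). Define $H^F$ as the block matrix with $A_1,\dots,A_{t'}$ placed block-diagonally in the top $t'(\delta-1)$ rows (zeros elsewhere) and the bottom block row $(B_1\;B_2\;\cdots\;B_{t'})$. An $(n,k,d;(r,\delta))$-LRC is a code of length $n$, dimension $k$, minimum distance $d$ in which each coordinate lies in a set $J$ of at most $r+\delta-1$ coordinates such that the restriction of the code to $J$ has minimum distance at least $\delta$; it is optimal if $d=n-k+1-(\lceil k/r\rceil-1)(\delta-1)$ (the Singleton-type bound). *)

theory Defs
  imports Complex_Main "HOL-Library.Cardinality"
begin

text \<open>Words of length n over the alphabet 'a are modelled as functions
  nat \<Rightarrow> 'a that vanish outside the coordinates {0..<n}.\<close>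

definition hamming_dist :: "nat \<Rightarrow> (nat \<Rightarrow> 'a::zero) \<Rightarrow> (nat \<Rightarrow> 'a) \<Rightarrow> nat" where
  "hamming_dist n c c' = card {j\<in>{..<n}. c j \<noteq> c' j}"

definition min_dist :: "nat \<Rightarrow> (nat \<Rightarrow> 'a::zero) set \<Rightarrow> nat" where
  "min_dist n C = Min {hamming_dist n c c' | c c'. c \<in> C \<and> c' \<in> C \<and> c \<noteq> c'}"

definition is_LRC :: "nat \<Rightarrow> nat \<Rightarrow> nat \<Rightarrow> nat \<Rightarrow> nat \<Rightarrow> (nat \<Rightarrow> 'a::{finite,zero}) set \<Rightarrow> bool" where
  "is_LRC n k d r \<delta> C \<longleftrightarrow>
     C \<subseteq> {c. \<forall>j\<ge>n. c j = 0} \<and>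
     card C = CARD('a) ^ k \<and>
     min_dist n C = d \<and>
     (\<forall>i<n. \<exists>J. J \<subseteq> {..<n} \<and> i \<in> J \<and> card J \<le> r + \<delta> - 1 \<and>
        (\<forall>c\<in>C. \<forall>c'\<in>C. (\<exists>j\<in>J. c j \<noteq> c' j) \<longrightarrow> \<delta> \<le> card {j\<in>J. c j \<noteq> c' j}))"

text \<open>Optimality: the Singleton-type bound d = n - k + 1 - (ceil(k/r) - 1)(delta - 1) is attained.\<close>
definition LRC_optimal :: "nat \<Rightarrow> nat \<Rightarrow> nat \<Rightarrow> nat \<Rightarrow> nat \<Rightarrow> bool" where
  "LRC_optimal n k d r \<delta> \<longleftrightarrow>
     int d = int n - int k + 1 - (\<lceil>real k / real r\<rceil> - 1) * (int \<delta> - 1)"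

definition evpt :: "(nat \<Rightarrow> nat \<Rightarrow> 'a) \<Rightarrow> (nat \<Rightarrow> nat \<Rightarrow> 'a) \<Rightarrow> (nat \<Rightarrow> 'a)
    \<Rightarrow> nat \<Rightarrow> nat \<Rightarrow> nat \<Rightarrow> nat \<Rightarrow> nat \<Rightarrow> 'a" where
  "evpt \<alpha> \<beta> \<gamma> s kI a i p =
     (if p < s * kI then \<alpha> (s * i + p div kI) (p mod kI)
      else if p < s * kI + a then \<beta> i (p - s * kI)
      else \<gamma> (p - (s * kI + a)))"

text \<open>The code C^F = kernel of H^F. Coordinate i*(r+delta-1)+p corresponds to column p of block i.
  Rows of A_i: exponents 0..delta-2 on block i; rows of (B_1 ... B_t'): exponents
  delta-1 .. a t' + delta - 2 on all coordinates.\<close>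
definition code_F :: "nat \<Rightarrow> nat \<Rightarrow> nat \<Rightarrow> nat \<Rightarrow> nat \<Rightarrow> (nat \<Rightarrow> nat \<Rightarrow> 'a::field) \<Rightarrow> (nat \<Rightarrow> nat \<Rightarrow> 'a)
    \<Rightarrow> (nat \<Rightarrow> 'a) \<Rightarrow> (nat \<Rightarrow> 'a) set" where
  "code_F \<delta> t' s a kI \<alpha> \<beta> \<gamma> =
     (let r = s * kI + a; m = r + \<delta> - 1; n = t' * m in
      {c. (\<forall>j\<ge>n. c j = 0) \<and>
          (\<forall>i<t'. \<forall>e<\<delta> - 1. (\<Sum>p<m. c (i * m + p) * evpt \<alpha> \<beta> \<gamma> s kI a i p ^ e) = 0) \<and>
          (\<forall>e\<in>{\<delta> - 1..<a * t' + \<delta> - 1}.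
              (\<Sum>i<t'. \<Sum>p<m. c (i * m + p) * evpt \<alpha> \<beta> \<gamma> s kI a i p ^ e) = 0)})"

end

theory Submission
  imports Defs "HOL-Computational_Algebra.Polynomial" "HOL-Library.FuncSet"
begin


lemma vander_weight:
  fixes x w :: "'b \<Rightarrow> 'a::field"
  assumes fin: "finite P" and inj: "inj_on x P"
    and eq: "\<forall>e<N. (\<Sum>p\<in>P. w p * x p ^ e) = 0" and nz: "\<exists>p\<in>P. w p \<noteq> 0"
  shows "N < card {p\<in>P. w p \<noteq> 0}"
proof (rule ccontr)
  define T where "T = {p\<in>P. w p \<noteq> 0}"
  assume "\<not> N < card {p\<in>P. w p \<noteq> 0}"
  hence cT: "card T \<le> N" by (simp add: T_def)
  obtain p0 where p0: "p0 \<in> P" "w p0 \<noteq> 0" using nz by blast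
  have finT: "finite T" using fin by (simp add: T_def)
  have p0T: "p0 \<in> T" using p0 by (simp add: T_def)
  define f where "f = (\<Prod>q\<in>T-{p0}. [:- x q, 1:])"
  have "degree f \<le> sum (degree \<circ> (\<lambda>q. [:- x q, 1:])) (T-{p0})"
    unfolding f_def using finT by (intro degree_prod_sum_le) auto
  also have "\<dots> = card (T - {p0})" by simp
  also have "\<dots> < card T" using finT p0T by (meson card_Diff1_less)
  finally have degf: "degree f < N" using cT by linarith
  have "(\<Sum>p\<in>P. w p * poly f (x p)) = (\<Sum>p\<in>P. \<Sum>i\<le>degree f. w p * (coeff f i * x p ^ i))"
    by (simp add: poly_altdef sum_distrib_left)
  also have "\<dots> = (\<Sum>i\<le>degree f. coeff f i * (\<Sum>p\<in>P. w p * x p ^ i))"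
    by (subst sum.swap) (simp add: sum_distrib_left mult_ac)
  also have "\<dots> = 0" using eq degf by (intro sum.neutral) auto
  finally have s0: "(\<Sum>p\<in>P. w p * poly f (x p)) = 0" .
  have "(\<Sum>p\<in>P. w p * poly f (x p)) = w p0 * poly f (x p0)"
  proof (rule sum.remove[OF fin p0(1), THEN trans])
    have "(\<Sum>p\<in>P - {p0}. w p * poly f (x p)) = 0"
    proof (intro sum.neutral ballI)
      fix p assume p: "p \<in> P - {p0}"
      show "w p * poly f (x p) = 0"
      proof (cases "w p = 0")
        case False
        hence "p \<in> T - {p0}" using p by (simp add: T_def)
        hence "poly f (x p) = 0" unfolding f_def poly_prod using finT
          by (intro prod_zero) auto
        thus ?thesis by simp
      qed simp
    qed
    thus "w p0 * poly f (x p0) + (\<Sum>p\<in>P - {p0}. w p * poly f (x p)) = w p0 * poly f (x p0)" by simp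
  qed
  moreover have "poly f (x p0) \<noteq> 0"
    unfolding f_def poly_prod
  proof (subst prod_zero_iff)
    show "finite (T - {p0})" using finT by simp
    show "\<not> (\<exists>a\<in>T - {p0}. poly [:- x a, 1:] (x p0) = 0)"
    proof
      assume "\<exists>a\<in>T - {p0}. poly [:- x a, 1:] (x p0) = 0"
      then obtain q where q: "q \<in> T - {p0}" "x p0 = x q" by auto
      hence "q \<in> P" by (simp add: T_def)
      with q p0 inj show False by (metis DiffE inj_on_def singletonI)
    qed
  qed
  ultimately show False using s0 p0 by simp
qed



lemma card_supp:
  assumes "finite D"
  shows "card {x :: 'd \<Rightarrow> 'a::{finite,zero}. \<forall>j. j \<notin> D \<longrightarrow> x j = 0} = CARD('a) ^ card D"
proof -
  have "bij_betw (\<lambda>x. restrict x D) {x :: 'd \<Rightarrow> 'a. \<forall>j. j \<notin> D \<longrightarrow> x j = 0} (D \<rightarrow>\<^sub>E UNIV)"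
  proof (rule bij_betw_byWitness[where f' = "\<lambda>g j. if j \<in> D then g j else 0"])
    show "\<forall>a\<in>{x. \<forall>j. j \<notin> D \<longrightarrow> x j = 0}. (\<lambda>j. if j \<in> D then restrict a D j else 0) = a"
      by (auto simp: fun_eq_iff)
    show "\<forall>a'\<in>D \<rightarrow>\<^sub>E UNIV. restrict (\<lambda>j. if j \<in> D then a' j else 0) D = a'"
      by (auto simp: fun_eq_iff PiE_def extensional_def)
  qed auto
  hence "card {x :: 'd \<Rightarrow> 'a. \<forall>j. j \<notin> D \<longrightarrow> x j = 0} = card (D \<rightarrow>\<^sub>E (UNIV::'a set))"
    by (rule bij_betw_same_card)
  also have "\<dots> = CARD('a) ^ card D" using assms by (simp add: card_funcsetE)
  finally show ?thesis .
qed

lemma finite_supp: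
  assumes "finite D"
  shows "finite {x :: 'd \<Rightarrow> 'a::{finite,zero}. \<forall>j. j \<notin> D \<longrightarrow> x j = 0}"
  by (rule card_ge_0_finite) (simp add: card_supp[OF assms])

lemma count_solutions:
  fixes L :: "('d \<Rightarrow> 'a::{finite,field}) \<Rightarrow> 'i \<Rightarrow> 'a"
  assumes finD: "finite D" and finI: "finite I"
    and add: "\<And>x y. L (\<lambda>j. x j + y j) = (\<lambda>i. L x i + L y i)"
    and out: "\<And>x j. j \<notin> I \<Longrightarrow> L x j = 0"
  shows "CARD('a) ^ card D \<le> CARD('a) ^ card I * card {x. (\<forall>j. j \<notin> D \<longrightarrow> x j = 0) \<and> L x = (\<lambda>_. 0)}"
proof -
  define V where "V = {x :: 'd \<Rightarrow> 'a. \<forall>j. j \<notin> D \<longrightarrow> x j = 0}"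
  define K where "K = {x. (\<forall>j. j \<notin> D \<longrightarrow> x j = 0) \<and> L x = (\<lambda>_. 0)}"
  have finV: "finite V" unfolding V_def using finD by (rule finite_supp)
  have KV: "K \<subseteq> V" by (auto simp: K_def V_def)
  have finK: "finite K" using finV KV finite_subset by blast
  have fib: "card {x\<in>V. L x = y} \<le> card K" if "y \<in> L ` V" for y
  proof -
    obtain x0 where x0: "x0 \<in> V" "y = L x0" using \<open>y \<in> L ` V\<close> by blast
    have "{x\<in>V. L x = y} \<subseteq> (\<lambda>k j. x0 j + k j) ` K"
    proof
      fix x assume x: "x \<in> {x\<in>V. L x = y}"
      define k where "k = (\<lambda>j. x j - x0 j)"
      have "L x = (\<lambda>i. L x0 i + L k i)"
        using add[of x0 k] by (simp add: k_def)
      hence "L k = (\<lambda>_. 0)" using x x0 by (auto simp: fun_eq_iff)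
      moreover have "\<forall>j. j \<notin> D \<longrightarrow> k j = 0" using x x0 by (auto simp: V_def k_def)
      ultimately have "k \<in> K" by (simp add: K_def)
      moreover have "x = (\<lambda>j. x0 j + k j)" by (simp add: k_def)
      ultimately show "x \<in> (\<lambda>k j. x0 j + k j) ` K" by blast
    qed
    hence "card {x\<in>V. L x = y} \<le> card ((\<lambda>k j. x0 j + k j) ` K)"
      using finK by (intro card_mono) auto
    also have "\<dots> \<le> card K" by (rule card_image_le[OF finK])
    finally show ?thesis .
  qed
  have "V = (\<Union>y\<in>L ` V. {x\<in>V. L x = y})" by auto
  hence "card V = card (\<Union>y\<in>L ` V. {x\<in>V. L x = y})" by simp
  also have "\<dots> \<le> (\<Sum>y\<in>L ` V. card {x\<in>V. L x = y})"
    using finV by (intro card_UN_le) simp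
  also have "\<dots> \<le> (\<Sum>y\<in>L ` V. card K)" by (intro sum_mono fib)
  also have "\<dots> = card (L ` V) * card K" by simp
  also have "card (L ` V) \<le> CARD('a) ^ card I"
  proof -
    have "L ` V \<subseteq> {f :: 'i \<Rightarrow> 'a. \<forall>j. j \<notin> I \<longrightarrow> f j = 0}" using out by auto
    hence "card (L ` V) \<le> card {f :: 'i \<Rightarrow> 'a. \<forall>j. j \<notin> I \<longrightarrow> f j = 0}"
      by (intro card_mono finite_supp finI)
    thus ?thesis using card_supp[OF finI, where 'a='a] by simp
  qed
  hence "card (L ` V) * card K \<le> CARD('a) ^ card I * card K" by simp
  finally show ?thesis unfolding V_def K_def using card_supp[OF finD, where 'a='a] by simp
qed



locale LS =
  fixes \<alpha> \<beta> :: "nat \<Rightarrow> nat \<Rightarrow> 'a::{finite,field}" and \<gamma> :: "nat \<Rightarrow> 'a"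
    and \<delta> t' s a kI :: nat
  assumes d2: "\<delta> \<ge> 2" and t1: "t' \<ge> 1" and s2: "s \<ge> 2" and a1: "a \<ge> 1" and k1: "kI \<ge> 1"
    and akI: "a * t' + \<delta> \<le> kI"
    and injA: "inj_on (\<lambda>(i, j). \<alpha> i j) ({..<s * t'} \<times> {..<kI})"
    and injB: "inj_on (\<lambda>(i, j). \<beta> i j) ({..<t'} \<times> {..<a})"
    and injG: "inj_on \<gamma> {..<\<delta> - 1}"
    and dAB: "(\<lambda>(i, j). \<alpha> i j) ` ({..<s * t'} \<times> {..<kI}) \<inter> (\<lambda>(i, j). \<beta> i j) ` ({..<t'} \<times> {..<a}) = {}"
    and dAG: "(\<lambda>(i, j). \<alpha> i j) ` ({..<s * t'} \<times> {..<kI}) \<inter> \<gamma> ` {..<\<delta> - 1} = {}"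
    and dBG: "(\<lambda>(i, j). \<beta> i j) ` ({..<t'} \<times> {..<a}) \<inter> \<gamma> ` {..<\<delta> - 1} = {}"
begin

abbreviation "r \<equiv> s * kI + a"
abbreviation "m \<equiv> s * kI + a + \<delta> - 1"
abbreviation "n \<equiv> t' * (s * kI + a + \<delta> - 1)"
abbreviation "X \<equiv> evpt \<alpha> \<beta> \<gamma> s kI a"
abbreviation "C \<equiv> code_F \<delta> t' s a kI \<alpha> \<beta> \<gamma>"

lemma m_eq: "m = r + (\<delta> - 1)" using d2 by simp

lemma memC: "c \<in> C \<longleftrightarrow> (\<forall>j\<ge>n. c j = 0) \<and>
          (\<forall>i<t'. \<forall>e<\<delta> - 1. (\<Sum>p<m. c (i * m + p) * X i p ^ e) = 0) \<and>
          (\<forall>e\<in>{\<delta> - 1..<a * t' + \<delta> - 1}.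
              (\<Sum>i<t'. \<Sum>p<m. c (i * m + p) * X i p ^ e) = 0)"
  by (simp add: code_F_def Let_def)

lemma zeroC: "(\<lambda>_. 0) \<in> C" by (simp add: memC)

lemma diffC: assumes "c \<in> C" "c' \<in> C" shows "(\<lambda>j. c j - c' j) \<in> C"
  using assms unfolding memC
  by (simp add: left_diff_distrib sum_subtractf)

definition P :: "((nat \<times> nat) + nat) set" where
  "P = Inl ` ({..<t'} \<times> {..<r}) \<union> Inr ` {..<\<delta> - 1}"

fun Y :: "(nat \<times> nat) + nat \<Rightarrow> 'a" where
  "Y (Inl (i, p)) = X i p"
| "Y (Inr l) = \<gamma> l"

lemma finP: "finite P" by (simp add: P_def)

lemma divmod_aux:
  assumes "p < s * kI" "p' < s * kI" "s * i + p div kI = s * i' + p' div kI" "p mod kI = p' mod kI"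
  shows "i = i' \<and> p = p'"
proof -
  have pd: "p div kI < s" "p' div kI < s" using assms(1,2) k1
    by (simp_all add: div_less_iff_less_mult mult.commute)
  have "(s * i + p div kI) div s = i" using pd s2 by simp
  moreover have "(s * i' + p' div kI) div s = i'" using pd s2 by simp
  ultimately have ii: "i = i'" using assms(3) by simp
  hence "p div kI = p' div kI" using assms(3) by simp
  hence "p = p'" using assms(4) by (metis div_mult_mod_eq)
  thus ?thesis using ii by simp
qed

lemma injY: "inj_on Y P"
proof (rule inj_onI)
  fix u v assume u: "u \<in> P" and v: "v \<in> P" and eq: "Y u = Y v"
  have Aidx: "(s * i + p div kI, p mod kI) \<in> {..<s * t'} \<times> {..<kI}"
    if "i < t'" "p < s * kI" for i p
  proof -
    have pd: "p div kI < s" using that k1 by (simp add: div_less_iff_less_mult mult.commute)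
    have "s * i + p div kI < s * (i + 1)" using pd by simp
    also have "s * (i + 1) \<le> s * t'" using that(1) by (intro mult_le_mono2) simp
    finally show ?thesis using k1 by simp
  qed
  have Aval: "X i p \<in> (\<lambda>(i, j). \<alpha> i j) ` ({..<s * t'} \<times> {..<kI})
        \<and> X i p = \<alpha> (s * i + p div kI) (p mod kI)" if "i < t'" "p < s * kI" for i p
  proof -
    have "X i p = \<alpha> (s * i + p div kI) (p mod kI)" using that by (simp add: evpt_def)
    thus ?thesis using Aidx[OF that] by (metis (no_types, lifting) case_prod_conv image_eqI)
  qed
  have Bval: "X i p \<in> (\<lambda>(i, j). \<beta> i j) ` ({..<t'} \<times> {..<a})
        \<and> X i p = \<beta> i (p - s * kI)" if "i < t'" "s * kI \<le> p" "p < r" for i p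
    using that by (auto simp: evpt_def intro!: image_eqI[where x="(i, p - s * kI)"])
  have Gval: "\<gamma> l \<in> \<gamma> ` {..<\<delta> - 1}" if "l < \<delta> - 1" for l using that by simp
  show "u = v"
  proof (cases u)
    case (Inl ip)
    then obtain i p where u': "u = Inl (i, p)" "i < t'" "p < r" using u by (auto simp: P_def)
    show ?thesis
    proof (cases v)
      case (Inl jq)
      then obtain i' p' where v': "v = Inl (i', p')" "i' < t'" "p' < r" using v by (auto simp: P_def)
      have Yu: "Y u = X i p" "Y v = X i' p'" using u' v' by simp_all
      consider "p < s * kI" "p' < s * kI" | "p < s * kI" "s * kI \<le> p'" | "s * kI \<le> p" "p' < s * kI"
         | "s * kI \<le> p" "s * kI \<le> p'" by linarith
      thus ?thesis
      proof cases
        case 1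
        have "\<alpha> (s * i + p div kI) (p mod kI) = \<alpha> (s * i' + p' div kI) (p' mod kI)"
          using Aval[of i p] Aval[of i' p'] 1 u' v' eq Yu by simp
        moreover have m1: "(s * i + p div kI, p mod kI) \<in> {..<s * t'} \<times> {..<kI}"
          using Aidx 1 u' by auto
        moreover have m2: "(s * i' + p' div kI, p' mod kI) \<in> {..<s * t'} \<times> {..<kI}"
          using Aidx 1 v' by auto
        ultimately have "(s * i + p div kI, p mod kI) = (s * i' + p' div kI, p' mod kI)"
          using inj_onD[OF injA _ m1 m2] by simp
        thus ?thesis using divmod_aux[OF 1] u' v' by auto
      next
        case 2
        have "X i p \<in> (\<lambda>(i, j). \<alpha> i j) ` ({..<s * t'} \<times> {..<kI})" using Aval[of i p] 2 u' by blast
        moreover have "X i p \<in> (\<lambda>(i, j). \<beta> i j) ` ({..<t'} \<times> {..<a})"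
          using Bval[of i' p'] 2 v' eq Yu by metis
        ultimately show ?thesis using dAB by blast
      next
        case 3
        have "X i' p' \<in> (\<lambda>(i, j). \<alpha> i j) ` ({..<s * t'} \<times> {..<kI})" using Aval[of i' p'] 3 v' by blast
        moreover have "X i' p' \<in> (\<lambda>(i, j). \<beta> i j) ` ({..<t'} \<times> {..<a})"
          using Bval[of i p] 3 u' eq Yu by metis
        ultimately show ?thesis using dAB by blast
      next
        case 4
        have "\<beta> i (p - s * kI) = \<beta> i' (p' - s * kI)" using Bval[of i p] Bval[of i' p'] 4 u' v' eq Yu by simp
        moreover have "(i, p - s * kI) \<in> {..<t'} \<times> {..<a}" "(i', p' - s * kI) \<in> {..<t'} \<times> {..<a}"
          using 4 u' v' by auto
        ultimately have "(i, p - s * kI) = (i', p' - s * kI)" using inj_onD[OF injB] by auto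
        thus ?thesis using 4 u' v' by auto
      qed
    next
      case (Inr l)
      hence v': "v = Inr l" "l < \<delta> - 1" using v by (auto simp: P_def)
      show ?thesis
      proof (cases "p < s * kI")
        case True
        have "X i p \<in> (\<lambda>(i, j). \<alpha> i j) ` ({..<s * t'} \<times> {..<kI})" using Aval[of i p] True u' v' by blast
        moreover have "X i p \<in> \<gamma> ` {..<\<delta> - 1}" using u' v' eq by (metis Y.simps image_eqI lessThan_iff)
        ultimately show ?thesis using dAG by blast
      next
        case False
        have "X i p \<in> (\<lambda>(i, j). \<beta> i j) ` ({..<t'} \<times> {..<a})" using Bval[of i p] False u' v' by (meson not_less)
        moreover have "X i p \<in> \<gamma> ` {..<\<delta> - 1}" using u' v' eq by (metis Y.simps image_eqI lessThan_iff)
        ultimately show ?thesis using dBG by blast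
      qed
    qed
  next
    case (Inr l)
    hence u': "u = Inr l" "l < \<delta> - 1" using u by (auto simp: P_def)
    show ?thesis
    proof (cases v)
      case (Inl jq)
      then obtain i p where v': "v = Inl (i, p)" "i < t'" "p < r" using v by (auto simp: P_def)
      show ?thesis
      proof (cases "p < s * kI")
        case True
        have "X i p \<in> (\<lambda>(i, j). \<alpha> i j) ` ({..<s * t'} \<times> {..<kI})" using Aval[of i p] True u' v' by blast
        moreover have "X i p \<in> \<gamma> ` {..<\<delta> - 1}" using u' v' eq by (metis Y.simps image_eqI lessThan_iff)
        ultimately show ?thesis using dAG by blast
      next
        case False
        have "X i p \<in> (\<lambda>(i, j). \<beta> i j) ` ({..<t'} \<times> {..<a})" using Bval[of i p] False u' v' by (meson not_less)
        moreover have "X i p \<in> \<gamma> ` {..<\<delta> - 1}" using u' v' eq by (metis Y.simps image_eqI lessThan_iff)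
        ultimately show ?thesis using dBG by blast
      qed
    next
      case (Inr l')
      hence "v = Inr l'" "l' < \<delta> - 1" using v by (auto simp: P_def)
      thus ?thesis using u' eq injG by (auto simp: inj_on_def)
    qed
  qed
qed

end


lemma sum_split_nat: "(\<Sum>p<r + (k::nat). f p) = (\<Sum>p<r. f p) + (\<Sum>l<k. f (r + l))"
  by (induction k) (simp_all add: add.assoc)

context LS begin

fun wc :: "(nat \<Rightarrow> 'a) \<Rightarrow> (nat \<times> nat) + nat \<Rightarrow> 'a" where
  "wc c (Inl (i, p)) = c (i * m + p)"
| "wc c (Inr l) = (\<Sum>i<t'. c (i * m + r + l))"

lemma Xg: "X i (r + l) = \<gamma> l" by (simp add: evpt_def)

lemma allEq:
  assumes "c \<in> C" "e < a * t' + \<delta> - 1"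
  shows "(\<Sum>i<t'. \<Sum>p<m. c (i * m + p) * X i p ^ e) = 0"
proof (cases "e < \<delta> - 1")
  case True
  thus ?thesis using assms(1) unfolding memC by (intro sum.neutral) auto
next
  case False
  thus ?thesis using assms unfolding memC by auto
qed

lemma globalP:
  assumes "c \<in> C" "e < a * t' + \<delta> - 1"
  shows "(\<Sum>u\<in>P. wc c u * Y u ^ e) = 0"
proof -
  have "(\<Sum>u\<in>P. wc c u * Y u ^ e) =
        (\<Sum>u\<in>Inl ` ({..<t'} \<times> {..<r}). wc c u * Y u ^ e) + (\<Sum>u\<in>Inr ` {..<\<delta> - 1}. wc c u * Y u ^ e)"
    unfolding P_def by (intro sum.union_disjoint) auto
  also have "(\<Sum>u\<in>Inl ` ({..<t'} \<times> {..<r}). wc c u * Y u ^ e) =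
             (\<Sum>(i,p)\<in>{..<t'} \<times> {..<r}. c (i * m + p) * X i p ^ e)"
    by (subst sum.reindex) (auto intro!: sum.cong)
  also have "\<dots> = (\<Sum>i<t'. \<Sum>p<r. c (i * m + p) * X i p ^ e)"
    by (rule sum.cartesian_product[symmetric])
  also have "(\<Sum>u\<in>Inr ` {..<\<delta> - 1}. wc c u * Y u ^ e) =
             (\<Sum>l<\<delta> - 1. (\<Sum>i<t'. c (i * m + r + l)) * \<gamma> l ^ e)"
    by (subst sum.reindex) auto
  also have "\<dots> = (\<Sum>i<t'. \<Sum>l<\<delta> - 1. c (i * m + (r + l)) * X i (r + l) ^ e)"
    unfolding Xg sum_distrib_right by (subst sum.swap) (simp add: add.assoc)
  also have "(\<Sum>i<t'. \<Sum>p<r. c (i * m + p) * X i p ^ e) + \<dots> =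
             (\<Sum>i<t'. \<Sum>p<m. c (i * m + p) * X i p ^ e)"
    unfolding m_eq sum_split_nat sum.distrib by simp
  also have "\<dots> = 0" using allEq[OF assms] .
  finally show ?thesis .
qed

lemma injX: assumes "i < t'" shows "inj_on (X i) {..<m}"
proof -
  define emb where "emb p = (if p < r then Inl (i, p) else Inr (p - r))" for p
  have "inj_on emb {..<m}" by (auto simp: emb_def inj_on_def split: if_splits)
  moreover have "emb ` {..<m} \<subseteq> P" using assms by (auto simp: emb_def P_def)
  ultimately have "inj_on (Y \<circ> emb) {..<m}"
    using injY by (meson comp_inj_on inj_on_subset)
  moreover have "(Y \<circ> emb) p = X i p" if "p < m" for p
  proof (cases "p < r")
    case False
    hence "p = r + (p - r)" by simp
    hence "X i p = \<gamma> (p - r)" by (metis Xg)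
    thus ?thesis using False by (simp add: emb_def)
  qed (simp add: emb_def)
  ultimately show ?thesis by (simp add: inj_on_def)
qed

end


lemma dm_nat: "p < (M::nat) \<Longrightarrow> (i * M + p) div M = i \<and> (i * M + p) mod M = p"
  by simp

lemma lt_nat: "i < (T::nat) \<Longrightarrow> p < M \<Longrightarrow> i * M + p < T * M"
proof -
  assume "i < T" "p < M"
  have "(i + 1) * M \<le> T * M" using \<open>i < T\<close> by (intro mult_right_mono) simp_all
  thus ?thesis using \<open>p < M\<close> by simp
qed

context LS begin

lemma m_pos: "0 < m" using d2 by simp

lemma localEq:
  assumes "c \<in> C" "i < t'" "e < \<delta> - 1"
  shows "(\<Sum>p<m. c (i * m + p) * X i p ^ e) = 0"
  using assms unfolding memC by auto

lemma zeroP: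
  assumes cC: "c \<in> C" and z: "\<forall>u\<in>P. wc c u = 0"
  shows "c = (\<lambda>_. 0)"
proof -
  have A: "c (i * m + p) = 0" if "i < t'" "p < r" for i p
  proof -
    have "Inl (i, p) \<in> P" using that by (simp add: P_def)
    thus ?thesis using z by force
  qed
  have G: "c (i * m + (r + l)) = 0" if i: "i < t'" and l: "l < \<delta> - 1" for i l
  proof (rule ccontr)
    assume nz: "c (i * m + (r + l)) \<noteq> 0"
    have "\<forall>e<\<delta> - 1. (\<Sum>l\<in>{..<\<delta> - 1}. c (i * m + (r + l)) * \<gamma> l ^ e) = 0"
    proof (intro allI impI)
      fix e assume e: "e < \<delta> - 1"
      have "0 = (\<Sum>p<m. c (i * m + p) * X i p ^ e)" using localEq[OF cC i e] by simp
      also have "\<dots> = (\<Sum>p<r. c (i * m + p) * X i p ^ e) + (\<Sum>l<\<delta> - 1. c (i * m + (r + l)) * X i (r + l) ^ e)"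
        unfolding m_eq by (rule sum_split_nat)
      also have "(\<Sum>p<r. c (i * m + p) * X i p ^ e) = 0" using A[OF i] by simp
      finally show "(\<Sum>l\<in>{..<\<delta> - 1}. c (i * m + (r + l)) * \<gamma> l ^ e) = 0" by (simp add: Xg)
    qed
    from vander_weight[OF _ injG this] nz l
    have "\<delta> - 1 < card {l' \<in> {..<\<delta> - 1}. c (i * m + (r + l')) \<noteq> 0}" by auto
    moreover have "card {l' \<in> {..<\<delta> - 1}. c (i * m + (r + l')) \<noteq> 0} \<le> \<delta> - 1"
      by (metis (no_types, lifting) card_lessThan card_mono finite_lessThan mem_Collect_eq subsetI)
    ultimately show False by simp
  qed
  show ?thesis
  proof
    fix j
    show "c j = 0"
    proof (cases "j < n")
      case False thus ?thesis using cC unfolding memC by auto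
    next
      case True
      define i where "i = j div m"
      define p where "p = j mod m"
      have j: "j = i * m + p" unfolding i_def p_def by (rule div_mult_mod_eq[symmetric])
      have i: "i < t'" using True m_pos by (simp add: i_def div_less_iff_less_mult)
      have p: "p < m" using m_pos by (simp add: p_def)
      show ?thesis
      proof (cases "p < r")
        case True thus ?thesis using A i j by simp
      next
        case False
        hence "p = r + (p - r)" "p - r < \<delta> - 1" using p m_eq by linarith+
        thus ?thesis using G[OF i, of "p - r"] j by metis
      qed
    qed
  qed
qed

lemma weight:
  assumes cC: "c \<in> C" and nz: "c \<noteq> (\<lambda>_. 0)"
  shows "a * t' + \<delta> \<le> card {j\<in>{..<n}. c j \<noteq> 0}"
proof -
  have "\<exists>u\<in>P. wc c u \<noteq> 0" using zeroP[OF cC] nz by blast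
  from vander_weight[OF finP injY _ this, of "a * t' + \<delta> - 1"] globalP[OF cC]
  have lb: "a * t' + \<delta> - 1 < card {u\<in>P. wc c u \<noteq> 0}" by blast
  define SA where "SA = {(i, p). i < t' \<and> p < r \<and> c (i * m + p) \<noteq> 0}"
  define SG where "SG = {l. l < \<delta> - 1 \<and> wc c (Inr l) \<noteq> 0}"
  define TA where "TA = {j. j < n \<and> c j \<noteq> 0 \<and> j mod m < r}"
  define TB where "TB = {j. j < n \<and> c j \<noteq> 0 \<and> r \<le> j mod m}"
  define f where "f = (\<lambda>(i, p). i * m + p)"
  define g where "g = (\<lambda>j. j mod m - r)"
  have finSA: "finite SA" unfolding SA_def
    by (rule finite_subset[of _ "{..<t'} \<times> {..<r}"]) auto
  have finSG: "finite SG" unfolding SG_def by simp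
  have finTB: "finite TB" unfolding TB_def by simp
  have "{u\<in>P. wc c u \<noteq> 0} \<subseteq> Inl ` SA \<union> Inr ` SG"
    by (auto simp: P_def SA_def SG_def)
  hence "card {u\<in>P. wc c u \<noteq> 0} \<le> card (Inl ` SA \<union> Inr ` SG)"
    using finSA finSG by (intro card_mono) auto
  also have "\<dots> \<le> card (Inl ` SA :: ((nat \<times> nat) + nat) set) + card (Inr ` SG :: ((nat \<times> nat) + nat) set)"
    by (rule card_Un_le)
  also have "\<dots> \<le> card SA + card SG" by (intro add_mono card_image_le finSA finSG)
  also have "card SA = card (f ` SA)"
  proof (rule card_image[symmetric], rule inj_onI)
    fix x y assume x: "x \<in> SA" and y: "y \<in> SA" and fxy: "f x = f y"
    obtain i p where ip: "x = (i, p)" "p < r" using x by (auto simp: SA_def)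
    obtain i' p' where ip': "y = (i', p')" "p' < r" using y by (auto simp: SA_def)
    have pm: "p < m" "p' < m" using ip(2) ip'(2) m_eq by linarith+
    have e: "i * m + p = i' * m + p'" using fxy ip ip' by (simp add: f_def)
    have "i = i'" using dm_nat[OF pm(1), of i] dm_nat[OF pm(2), of i'] e by metis
    moreover have "p = p'" using dm_nat[OF pm(1), of i] dm_nat[OF pm(2), of i'] e by metis
    ultimately show "x = y" using ip ip' by simp
  qed
  also have "f ` SA \<subseteq> TA"
  proof
    fix j assume "j \<in> f ` SA"
    then obtain i p where ip: "i < t'" "p < r" "c (i * m + p) \<noteq> 0" "j = i * m + p"
      by (auto simp: SA_def f_def)
    have pm: "p < m" using ip(2) m_eq by linarith
    show "j \<in> TA" using ip lt_nat[OF ip(1) pm] dm_nat[OF pm, of i] by (simp add: TA_def)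
  qed
  hence "card (f ` SA) \<le> card TA" by (intro card_mono) (auto simp: TA_def)
  also have "SG \<subseteq> g ` TB"
  proof
    fix l assume l: "l \<in> SG"
    hence "(\<Sum>i<t'. c (i * m + r + l)) \<noteq> 0" "l < \<delta> - 1" by (auto simp: SG_def)
    then obtain i where i: "i < t'" "c (i * m + r + l) \<noteq> 0"
      by (meson sum.neutral lessThan_iff)
    have pm: "r + l < m" using \<open>l < \<delta> - 1\<close> m_eq by linarith
    have "i * m + (r + l) \<in> TB" using i lt_nat[OF i(1) pm] dm_nat[OF pm, of i]
      by (simp add: TB_def add.assoc)
    moreover have "g (i * m + (r + l)) = l" using dm_nat[OF pm, of i] by (simp add: g_def)
    ultimately show "l \<in> g ` TB" by force
  qed
  hence "card SG \<le> card (g ` TB)" using finTB by (intro card_mono) auto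
  also have "card (g ` TB) \<le> card TB" using finTB by (rule card_image_le)
  also have "card TA + card TB = card (TA \<union> TB)"
    by (rule card_Un_disjoint[symmetric]) (auto simp: TA_def TB_def)
  also have "TA \<union> TB = {j\<in>{..<n}. c j \<noteq> 0}" by (auto simp: TA_def TB_def)
  finally show ?thesis using lb by linarith
qed

end


context LS begin

lemma locality:
  "\<forall>i<n. \<exists>J. J \<subseteq> {..<n} \<and> i \<in> J \<and> card J \<le> s * kI + a + \<delta> - 1 \<and>
        (\<forall>c\<in>C. \<forall>c'\<in>C. (\<exists>j\<in>J. c j \<noteq> c' j) \<longrightarrow> \<delta> \<le> card {j\<in>J. c j \<noteq> c' j})"
proof (intro allI impI)
  fix i0 assume i0: "i0 < n"
  define b where "b = i0 div m"
  have b: "b < t'" using i0 m_pos by (simp add: b_def div_less_iff_less_mult)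
  define h where "h = (\<lambda>p. b * m + p)"
  define J where "J = h ` {..<m}"
  have injh: "inj_on h {..<m}" by (simp add: h_def inj_on_def)
  have cJ: "card J = m" unfolding J_def using injh by (simp add: card_image)
  have Jn: "J \<subseteq> {..<n}" unfolding J_def h_def using lt_nat[OF b] by auto
  have iJ: "i0 \<in> J"
  proof -
    have "i0 = h (i0 mod m)" unfolding h_def b_def by (rule div_mult_mod_eq[symmetric])
    moreover have "i0 mod m < m" using m_pos by simp
    ultimately show ?thesis unfolding J_def by blast
  qed
  have dist: "\<delta> \<le> card {j\<in>J. c j \<noteq> c' j}"
    if cC: "c \<in> C" and c'C: "c' \<in> C" and ex: "\<exists>j\<in>J. c j \<noteq> c' j" for c c'
  proof -
    define d where "d = (\<lambda>j. c j - c' j)"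
    have dC: "d \<in> C" unfolding d_def using diffC[OF cC c'C] .
    have eqs: "\<forall>e<\<delta> - 1. (\<Sum>p\<in>{..<m}. d (b * m + p) * X b p ^ e) = 0"
      using localEq[OF dC b] by simp
    have nz: "\<exists>p\<in>{..<m}. d (b * m + p) \<noteq> 0" using ex by (auto simp: J_def h_def d_def)
    from vander_weight[OF _ injX[OF b] eqs nz]
    have "\<delta> - 1 < card {p\<in>{..<m}. d (b * m + p) \<noteq> 0}" by simp
    moreover have "{j\<in>J. c j \<noteq> c' j} = h ` {p\<in>{..<m}. d (b * m + p) \<noteq> 0}"
      by (auto simp: J_def h_def d_def)
    moreover have "card (h ` {p\<in>{..<m}. d (b * m + p) \<noteq> 0}) = card {p\<in>{..<m}. d (b * m + p) \<noteq> 0}"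
      by (rule card_image) (simp add: h_def inj_on_def)
    ultimately show ?thesis by simp
  qed
  show "\<exists>J. J \<subseteq> {..<n} \<and> i0 \<in> J \<and> card J \<le> s * kI + a + \<delta> - 1 \<and>
        (\<forall>c\<in>C. \<forall>c'\<in>C. (\<exists>j\<in>J. c j \<noteq> c' j) \<longrightarrow> \<delta> \<le> card {j\<in>J. c j \<noteq> c' j})"
    using Jn iJ cJ dist by (intro exI[of _ J]) auto
qed

lemma C_sub: "C \<subseteq> {c. \<forall>j. j \<notin> {..<n} \<longrightarrow> c j = 0}" by (auto simp: memC)

lemma finC: "finite C" using finite_subset[OF C_sub finite_supp] by simp

lemma card_upper: "card C \<le> CARD('a) ^ (s * t' * kI)"
proof -
  define f where "f = (\<lambda>(i::nat, p::nat). i * m + p)"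
  define Aset where "Aset = f ` ({..<t'} \<times> {..<s * kI})"
  have injf: "inj_on f ({..<t'} \<times> {..<s * kI})"
  proof (rule inj_onI)
    fix x y assume x: "x \<in> {..<t'} \<times> {..<s * kI}" and y: "y \<in> {..<t'} \<times> {..<s * kI}" and fxy: "f x = f y"
    obtain i p where ip: "x = (i, p)" "p < s * kI" using x by auto
    obtain i' p' where ip': "y = (i', p')" "p' < s * kI" using y by auto
    have pm: "p < m" "p' < m" using ip(2) ip'(2) m_eq by linarith+
    have e: "i * m + p = i' * m + p'" using fxy ip ip' by (simp add: f_def)
    have "i = i'" using dm_nat[OF pm(1), of i] dm_nat[OF pm(2), of i'] e by metis
    moreover have "p = p'" using dm_nat[OF pm(1), of i] dm_nat[OF pm(2), of i'] e by metis
    ultimately show "x = y" using ip ip' by simp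
  qed
  have cA: "card Aset = s * t' * kI" unfolding Aset_def using injf
    by (simp add: card_image card_cartesian_product)
  define R where "R = (\<lambda>c j. if j \<in> Aset then c j else (0::'a))"
  have "inj_on R C"
  proof (rule inj_onI)
    fix c c' assume cC: "c \<in> C" and c'C: "c' \<in> C" and Rc: "R c = R c'"
    define d where "d = (\<lambda>j. c j - c' j)"
    have dC: "d \<in> C" unfolding d_def using diffC[OF cC c'C] .
    have dA: "d (i * m + p) = 0" if "i < t'" "p < s * kI" for i p
    proof -
      have "i * m + p \<in> Aset" using that unfolding Aset_def f_def by force
      thus ?thesis using fun_cong[OF Rc, of "i * m + p"] by (simp add: R_def d_def)
    qed
    have "\<forall>u\<in>P. wc d u = 0"
    proof (rule ccontr)
      assume "\<not> (\<forall>u\<in>P. wc d u = 0)"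
      hence ex: "\<exists>u\<in>P. wc d u \<noteq> 0" by blast
      from vander_weight[OF finP injY _ ex, of "a * t' + \<delta> - 1"] globalP[OF dC]
      have lb: "a * t' + \<delta> - 1 < card {u\<in>P. wc d u \<noteq> 0}" by blast
      have "{u\<in>P. wc d u \<noteq> 0} \<subseteq> Inl ` ({..<t'} \<times> {s * kI..<r}) \<union> Inr ` {..<\<delta> - 1}"
      proof
        fix u assume u: "u \<in> {u\<in>P. wc d u \<noteq> 0}"
        show "u \<in> Inl ` ({..<t'} \<times> {s * kI..<r}) \<union> Inr ` {..<\<delta> - 1}"
        proof (cases u)
          case (Inl ip)
          then obtain i p where "u = Inl (i, p)" "i < t'" "p < r" using u by (auto simp: P_def)
          moreover have "\<not> p < s * kI" using dA u calculation by auto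
          ultimately show ?thesis by auto
        next
          case (Inr l) thus ?thesis using u by (auto simp: P_def)
        qed
      qed
      hence "card {u\<in>P. wc d u \<noteq> 0} \<le> card (Inl ` ({..<t'} \<times> {s * kI..<r}) \<union> Inr ` {..<\<delta> - 1})"
        by (intro card_mono) auto
      also have "\<dots> \<le> card (Inl ` ({..<t'} \<times> {s * kI..<r}) :: ((nat \<times> nat) + nat) set)
                   + card (Inr ` {..<\<delta> - 1} :: ((nat \<times> nat) + nat) set)" by (rule card_Un_le)
      also have "\<dots> = t' * a + (\<delta> - 1)"
        by (simp add: card_image card_cartesian_product)
      finally have "card {u\<in>P. wc d u \<noteq> 0} \<le> t' * a + (\<delta> - 1)" .
      thus False using lb d2 by (simp add: mult.commute)
    qed
    hence "d = (\<lambda>_. 0)" using zeroP[OF dC] by blast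
    thus "c = c'" by (auto simp: d_def fun_eq_iff)
  qed
  hence "card C = card (R ` C)" by (simp add: card_image)
  also have "\<dots> \<le> card {x :: nat \<Rightarrow> 'a. \<forall>j. j \<notin> Aset \<longrightarrow> x j = 0}"
    by (intro card_mono finite_supp) (auto simp: Aset_def R_def)
  also have "\<dots> = CARD('a) ^ (s * t' * kI)" using card_supp[of Aset] cA by (simp add: Aset_def)
  finally show ?thesis .
qed

end


lemma card_field_ge2: "2 \<le> CARD('a::{finite,field})"
proof -
  have "card {0::'a, 1} = 2" by simp
  moreover have "card {0::'a, 1} \<le> CARD('a)" by (rule card_mono) auto
  ultimately show ?thesis by simp
qed

context LS begin

lemma card_lower: "CARD('a) ^ (s * t' * kI) \<le> card C"
proof -
  define I :: "(nat \<times> nat) set" where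
    "I = ({..<t'} \<times> {..<\<delta> - 1}) \<union> ({t'} \<times> {\<delta> - 1..<a * t' + \<delta> - 1})"
  define L :: "(nat \<Rightarrow> 'a) \<Rightarrow> nat \<times> nat \<Rightarrow> 'a" where
    "L c = (\<lambda>(i, e). if i < t' \<and> e < \<delta> - 1 then (\<Sum>p<m. c (i * m + p) * X i p ^ e)
                else if i = t' \<and> \<delta> - 1 \<le> e \<and> e < a * t' + \<delta> - 1
                then (\<Sum>i'<t'. \<Sum>p<m. c (i' * m + p) * X i' p ^ e) else 0)" for c
  have add: "L (\<lambda>j. x j + y j) = (\<lambda>i. L x i + L y i)" for x y
    by (auto simp: L_def fun_eq_iff distrib_right sum.distrib)
  have out: "L x j = 0" if "j \<notin> I" for x j
    using that by (cases j) (auto simp: L_def I_def)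
  have K: "{x. (\<forall>j. j \<notin> {..<n} \<longrightarrow> x j = 0) \<and> L x = (\<lambda>_. 0)} = C"
  proof (intro set_eqI iffI)
    fix x assume "x \<in> {x. (\<forall>j. j \<notin> {..<n} \<longrightarrow> x j = 0) \<and> L x = (\<lambda>_. 0)}"
    hence x0: "\<forall>j. j \<notin> {..<n} \<longrightarrow> x j = 0" and Lx: "L x = (\<lambda>_. 0)" by auto
    have loc: "(\<Sum>p<m. x (i * m + p) * X i p ^ e) = 0" if "i < t'" "e < \<delta> - 1" for i e
      using fun_cong[OF Lx, of "(i, e)"] that by (simp add: L_def)
    have glob: "(\<Sum>i<t'. \<Sum>p<m. x (i * m + p) * X i p ^ e) = 0"
      if "e \<in> {\<delta> - 1..<a * t' + \<delta> - 1}" for e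
      using fun_cong[OF Lx, of "(t', e)"] that by (simp add: L_def)
    show "x \<in> C" unfolding memC using x0 loc glob by auto
  next
    fix x assume xC: "x \<in> C"
    show "x \<in> {x. (\<forall>j. j \<notin> {..<n} \<longrightarrow> x j = 0) \<and> L x = (\<lambda>_. 0)}"
      using xC unfolding memC by (auto simp: L_def fun_eq_iff)
  qed
  have cI: "card I = t' * (\<delta> - 1) + a * t'"
  proof -
    have "card I = card ({..<t'} \<times> {..<\<delta> - 1}) + card ({t'} \<times> {\<delta> - 1..<a * t' + \<delta> - 1})"
      unfolding I_def by (rule card_Un_disjoint) auto
    thus ?thesis using d2 by (simp add: card_cartesian_product)
  qed
  have finI: "finite I" by (simp add: I_def)
  from count_solutions[of "{..<n}" I L, OF _ finI add out] K
  have "CARD('a) ^ n \<le> CARD('a) ^ card I * card C" by simp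
  moreover have "n = card I + s * t' * kI"
  proof -
    have "n = t' * (s * kI) + t' * a + t' * (\<delta> - 1)" unfolding m_eq by (simp only: add_mult_distrib2)
    moreover have "s * t' * kI = t' * (s * kI)" "a * t' = t' * a" by simp_all
    ultimately show ?thesis using cI by linarith
  qed
  ultimately have "CARD('a) ^ card I * CARD('a) ^ (s * t' * kI) \<le> CARD('a) ^ card I * card C"
    by (simp add: power_add)
  thus ?thesis by simp
qed

lemma min_cw: "\<exists>c\<in>C. card {j\<in>{..<n}. c j \<noteq> 0} = a * t' + \<delta>"
proof -
  define M where "M = a * t' + \<delta>"
  have M2: "M \<ge> 2" using d2 by (simp add: M_def)
  have MkI: "M \<le> kI" using akI by (simp add: M_def)
  have "1 * kI \<le> s * kI" using s2 by (intro mult_le_mono1) simp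
  hence Mm: "M \<le> m" using MkI m_eq by linarith
  have mn: "m \<le> n" using t1 by simp
  have Mn: "M \<le> n" using Mm mn by linarith
  define L :: "(nat \<Rightarrow> 'a) \<Rightarrow> nat \<Rightarrow> 'a" where
    "L c = (\<lambda>e. if e < M - 1 then (\<Sum>p<M. c p * X 0 p ^ e) else 0)" for c
  have add: "L (\<lambda>j. x j + y j) = (\<lambda>i. L x i + L y i)" for x y
    by (auto simp: L_def fun_eq_iff distrib_right sum.distrib)
  have out: "L x j = 0" if "j \<notin> {..<M - 1}" for x j using that by (simp add: L_def)
  define K where "K = {x. (\<forall>j. j \<notin> {..<M} \<longrightarrow> x j = 0) \<and> L x = (\<lambda>_. 0)}"
  from count_solutions[of "{..<M}" "{..<M - 1}" L, OF _ _ add out]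
  have "CARD('a) ^ M \<le> CARD('a) ^ (M - 1) * card K" by (simp add: K_def)
  moreover have "CARD('a) ^ M = CARD('a) ^ (M - 1) * CARD('a)" using M2
    by (metis Suc_diff_1 less_le_trans pos2 power_Suc2)
  ultimately have "CARD('a) \<le> card K" by simp
  hence "2 \<le> card K" using card_field_ge2[where 'a='a] by linarith
  then obtain c where cK: "c \<in> K" and cnz: "c \<noteq> (\<lambda>_. 0)"
  proof -
    assume h: "\<And>c. c \<in> K \<Longrightarrow> c \<noteq> (\<lambda>_. 0) \<Longrightarrow> thesis"
    show thesis
    proof (rule ccontr)
      assume "\<not> thesis"
      hence "K \<subseteq> {\<lambda>_. 0}" using h by blast
      hence "card K \<le> card {(\<lambda>_. 0) :: nat \<Rightarrow> 'a}" by (intro card_mono) auto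
      hence "card K \<le> 1" by simp
      thus False using \<open>2 \<le> card K\<close> by simp
    qed
  qed
  have c0: "c j = 0" if "M \<le> j" for j using cK that by (auto simp: K_def)
  have ceq: "(\<Sum>p<M. c p * X 0 p ^ e) = 0" if "e < M - 1" for e
    using cK that by (auto simp: K_def L_def fun_eq_iff) (metis)
  have nz: "\<exists>p\<in>{..<M}. c p \<noteq> 0"
  proof (rule ccontr)
    assume h: "\<not> (\<exists>p\<in>{..<M}. c p \<noteq> 0)"
    have "c x = 0" for x
    proof (cases "x < M")
      case True thus ?thesis using h by auto
    next
      case False thus ?thesis using c0 by simp
    qed
    hence "c = (\<lambda>_. 0)" by auto
    thus False using cnz by simp
  qed
  have inj0: "inj_on (X 0) {..<M}" using injX[of 0] t1 Mm by (auto intro: inj_on_subset)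
  from vander_weight[OF _ inj0 _ nz, of "M - 1"] ceq
  have "M - 1 < card {p\<in>{..<M}. c p \<noteq> 0}" by simp
  moreover have "card {p\<in>{..<M}. c p \<noteq> 0} \<le> M"
    by (metis (no_types, lifting) card_lessThan card_mono finite_lessThan mem_Collect_eq subsetI)
  ultimately have cardM: "card {p\<in>{..<M}. c p \<noteq> 0} = M" by linarith
  have "{j\<in>{..<n}. c j \<noteq> 0} = {p\<in>{..<M}. c p \<noteq> 0}"
  proof (intro set_eqI iffI)
    fix x assume "x \<in> {j\<in>{..<n}. c j \<noteq> 0}"
    thus "x \<in> {p\<in>{..<M}. c p \<noteq> 0}" using c0 by (cases "x < M") auto
  next
    fix x assume "x \<in> {p\<in>{..<M}. c p \<noteq> 0}"
    thus "x \<in> {j\<in>{..<n}. c j \<noteq> 0}" using Mn by auto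
  qed
  hence wt: "card {j\<in>{..<n}. c j \<noteq> 0} = M" using cardM by simp
  have blk: "(\<Sum>p<m. c (i * m + p) * X i p ^ e) = 0" if "e < M - 1" for i e
  proof (cases "i = 0")
    case True
    have "(\<Sum>p<m. c (i * m + p) * X i p ^ e) = (\<Sum>p<M + (m - M). c p * X 0 p ^ e)"
    proof -
      have "M + (m - M) = m" using Mm by simp
      thus ?thesis using True by simp
    qed
    also have "\<dots> = (\<Sum>p<M. c p * X 0 p ^ e) + (\<Sum>l<m - M. c (M + l) * X 0 (M + l) ^ e)"
      by (rule sum_split_nat)
    also have "\<dots> = 0" using ceq[OF that] c0 by simp
    finally show ?thesis .
  next
    case False
    have "c (i * m + p) = 0" for p
    proof -
      have "1 * m \<le> i * m" using False by (intro mult_le_mono1) simp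
      hence "M \<le> i * m + p" using Mm by linarith
      thus ?thesis using c0 by blast
    qed
    thus ?thesis by simp
  qed
  have "c \<in> C" unfolding memC
  proof (intro conjI allI impI ballI)
    fix j assume "n \<le> j"
    hence "M \<le> j" using Mn by linarith
    thus "c j = 0" using c0 by blast
  next
    fix i e assume "i < t'" "e < \<delta> - 1"
    thus "(\<Sum>p<m. c (i * m + p) * X i p ^ e) = 0" using blk M_def by simp
  next
    fix e assume "e \<in> {\<delta> - 1..<a * t' + \<delta> - 1}"
    thus "(\<Sum>i<t'. \<Sum>p<m. c (i * m + p) * X i p ^ e) = 0" using blk M_def by simp
  qed
  thus ?thesis using wt M_def by blast
qed

end


context LS begin

lemma min_dist_C: "min_dist n C = a * t' + \<delta>"
proof -
  define S where "S = {hamming_dist n c c' | c c'. c \<in> C \<and> c' \<in> C \<and> c \<noteq> c'}"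
  have finS: "finite S"
  proof -
    have "S \<subseteq> (\<lambda>(c, c'). hamming_dist n c c') ` (C \<times> C)" by (auto simp: S_def)
    thus ?thesis using finC by (meson finite_SigmaI finite_imageI finite_subset)
  qed
  have lb: "a * t' + \<delta> \<le> y" if "y \<in> S" for y
  proof -
    obtain c c' where cc: "y = hamming_dist n c c'" "c \<in> C" "c' \<in> C" "c \<noteq> c'"
      using \<open>y \<in> S\<close> by (auto simp: S_def)
    define d where "d = (\<lambda>j. c j - c' j)"
    have dC: "d \<in> C" unfolding d_def using diffC[OF cc(2,3)] .
    have "d \<noteq> (\<lambda>_. 0)" using cc(4) by (auto simp: d_def fun_eq_iff)
    from weight[OF dC this] show ?thesis
      using cc(1) by (simp add: hamming_dist_def d_def)
  qed
  obtain c where c: "c \<in> C" "card {j\<in>{..<n}. c j \<noteq> 0} = a * t' + \<delta>" using min_cw by blast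
  have "c \<noteq> (\<lambda>_. 0)" using c(2) d2 by auto
  hence "hamming_dist n c (\<lambda>_. 0) \<in> S" using c(1) zeroC by (auto simp: S_def)
  moreover have "hamming_dist n c (\<lambda>_. 0) = a * t' + \<delta>" using c(2) by (simp add: hamming_dist_def)
  ultimately have "a * t' + \<delta> \<in> S" by simp
  hence "Min S = a * t' + \<delta>" using finS lb by (intro Min_eqI) auto
  thus ?thesis by (simp add: min_dist_def S_def)
qed

lemma optimal: "LRC_optimal n (s * t' * kI) (a * t' + \<delta>) (s * kI + a) \<delta>"
proof -
  have rpos: "0 < real (s * kI + a)" using a1 by (simp del: of_nat_add of_nat_mult)
  have "s * t' * kI \<le> t' * (s * kI + a)" by (simp add: algebra_simps)
  hence c1: "real (s * t' * kI) \<le> real t' * real (s * kI + a)" by (metis of_nat_le_iff of_nat_mult)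
  have "(t' - 1) * a < s * kI"
  proof -
    have "(t' - 1) * a \<le> t' * a" by simp
    also have "\<dots> < kI" using akI d2 by (simp add: mult.commute)
    also have "kI \<le> s * kI" using s2 by simp
    finally show ?thesis .
  qed
  hence "(t' - 1) * (s * kI + a) < s * t' * kI"
    using t1 by (cases t') (simp_all add: algebra_simps)
  hence c2: "real (t' - 1) * real (s * kI + a) < real (s * t' * kI)"
    by (metis of_nat_less_iff of_nat_mult)
  have ceil: "\<lceil>real (s * t' * kI) / real (s * kI + a)\<rceil> = int t'"
  proof (rule ceiling_unique)
    show "real_of_int (int t') - 1 < real (s * t' * kI) / real (s * kI + a)"
      using c2 rpos t1 by (simp add: field_simps of_nat_diff)
    show "real (s * t' * kI) / real (s * kI + a) \<le> real_of_int (int t')"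
      using c1 rpos by (simp add: field_simps)
  qed
  have nn: "int n = int t' * (int s * int kI + int a + int \<delta> - 1)"
    using d2 by (simp add: of_nat_diff)
  show ?thesis unfolding LRC_optimal_def ceil nn
    by (simp add: algebra_simps)
qed

lemma main: "is_LRC n (s * t' * kI) (a * t' + \<delta>) (s * kI + a) \<delta> C
       \<and> LRC_optimal n (s * t' * kI) (a * t' + \<delta>) (s * kI + a) \<delta>"
proof -
  have "C \<subseteq> {c. \<forall>j\<ge>n. c j = 0}" by (auto simp: memC)
  moreover have "card C = CARD('a) ^ (s * t' * kI)" using card_lower card_upper by simp
  ultimately show ?thesis unfolding is_LRC_def using min_dist_C locality optimal by blast
qed

end

theorem mainTheorem11:
  fixes \<alpha> \<beta> :: "nat \<Rightarrow> nat \<Rightarrow> 'a::{finite,field}" and \<gamma> :: "nat \<Rightarrow> 'a"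
    and \<delta> t' s a kI :: nat
  assumes "\<delta> \<ge> 2" and "t' \<ge> 1" and "s \<ge> 2" and "a \<ge> 1" and "kI \<ge> 1"
    and "a * t' + \<delta> \<le> kI"
    and "t' * (s * kI + a) + \<delta> - 1 \<le> CARD('a)"
    and "inj_on (\<lambda>(i, j). \<alpha> i j) ({..<s * t'} \<times> {..<kI})"
    and "inj_on (\<lambda>(i, j). \<beta> i j) ({..<t'} \<times> {..<a})"
    and "inj_on \<gamma> {..<\<delta> - 1}"
    and "(\<lambda>(i, j). \<alpha> i j) ` ({..<s * t'} \<times> {..<kI}) \<inter> (\<lambda>(i, j). \<beta> i j) ` ({..<t'} \<times> {..<a}) = {}"
    and "(\<lambda>(i, j). \<alpha> i j) ` ({..<s * t'} \<times> {..<kI}) \<inter> \<gamma> ` {..<\<delta> - 1} = {}"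
    and "(\<lambda>(i, j). \<beta> i j) ` ({..<t'} \<times> {..<a}) \<inter> \<gamma> ` {..<\<delta> - 1} = {}"
  shows "is_LRC (t' * (s * kI + a + \<delta> - 1)) (s * t' * kI) (a * t' + \<delta>) (s * kI + a) \<delta>
           (code_F \<delta> t' s a kI \<alpha> \<beta> \<gamma>)
       \<and> LRC_optimal (t' * (s * kI + a + \<delta> - 1)) (s * t' * kI) (a * t' + \<delta>) (s * kI + a) \<delta>"
proof -
  interpret LS \<alpha> \<beta> \<gamma> \<delta> t' s a kI using assms by unfold_locales auto
  show ?thesis using main by simp
qed

end
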